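(* Let $G$ be a finite solvable group, $N$ an abelian normal subgroup of $G$, $a\in G$, $C=\mathbf{C}_G(a)$, and $C_N=\{g\in G\mid [a,g]\in N\}$ (a subgroup of $G$ containing $C$). Then $$\operatorname{dl}\big(C_N/\operatorname{core}_{C_N}(C)\big)\le \operatorname{dl}\big(C_N/(C_N\cap\mathbf{C}_G(N))\big)+1.$$ If in addition $N$ is cyclic, then $\operatorname{dl}\big(C_N/\operatorname{core}_{C_N}(C)\big)\le 2$.
   Context: $[x,g]=x^{-1}g^{-1}xg$. $\mathbf{C}_G(a)$ is the centralizer of $a$ and $\mathbf{C}_G(N)$ the centralizer of the subgroup $N$. For a subgroup $K$ of a group $L$, $\operatorname{core}_L(K)=\bigcap_{l\in L}l^{-1}Kl$. $\operatorname{dl}$ denotes derived length. *)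

theory Defs
  imports "HOL-Algebra.Algebra"
begin

text \<open>Commutator convention of the paper: [x,g] = x^-1 g^-1 x g.\<close>
definition commutator :: "('a, 'b) monoid_scheme \<Rightarrow> 'a \<Rightarrow> 'a \<Rightarrow> 'a" where
  "commutator G x g = inv\<^bsub>G\<^esub> x \<otimes>\<^bsub>G\<^esub> inv\<^bsub>G\<^esub> g \<otimes>\<^bsub>G\<^esub> x \<otimes>\<^bsub>G\<^esub> g"

definition centralizer :: "('a, 'b) monoid_scheme \<Rightarrow> 'a set \<Rightarrow> 'a set" where
  "centralizer G S = {g \<in> carrier G. \<forall>s \<in> S. g \<otimes>\<^bsub>G\<^esub> s = s \<otimes>\<^bsub>G\<^esub> g}"

definition core :: "('a, 'b) monoid_scheme \<Rightarrow> 'a set \<Rightarrow> 'a set" where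
  "core L K = (\<Inter>l \<in> carrier L. {inv\<^bsub>L\<^esub> l \<otimes>\<^bsub>L\<^esub> k \<otimes>\<^bsub>L\<^esub> l | k. k \<in> K})"

definition derived_length :: "('a, 'b) monoid_scheme \<Rightarrow> nat" where
  "derived_length H = (LEAST n. (derived H ^^ n) (carrier H) = {\<one>\<^bsub>H\<^esub>})"

end

theory Submission
  imports Defs
begin

context group begin

lemma canc1 [simp]: "x \<in> carrier G \<Longrightarrow> y \<in> carrier G \<Longrightarrow> x \<otimes> (inv x \<otimes> y) = y"
  by (simp flip: m_assoc)
lemma canc2 [simp]: "x \<in> carrier G \<Longrightarrow> y \<in> carrier G \<Longrightarrow> inv x \<otimes> (x \<otimes> y) = y"
  by (simp flip: m_assoc)

lemma comm_mult:
  assumes "a \<in> carrier G" "g \<in> carrier G" "h \<in> carrier G"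
  shows "commutator G a (g \<otimes> h) = commutator G a h \<otimes> (inv h \<otimes> commutator G a g \<otimes> h)"
  using assms by (simp add: commutator_def m_assoc inv_mult_group)

lemma comm_inv:
  assumes "a \<in> carrier G" "g \<in> carrier G"
  shows "commutator G a (inv g) = g \<otimes> inv (commutator G a g) \<otimes> inv g"
  using assms by (simp add: commutator_def m_assoc inv_mult_group)

lemma comm_conj:
  assumes "a \<in> carrier G" "g \<in> carrier G"
  shows "inv g \<otimes> a \<otimes> g = a \<otimes> commutator G a g"
  using assms by (simp add: commutator_def m_assoc)


lemma comm_closed [simp]: "a \<in> carrier G \<Longrightarrow> g \<in> carrier G \<Longrightarrow> commutator G a g \<in> carrier G"
  by (simp add: commutator_def)

lemma CN_sub:
  assumes "N \<lhd> G" "a \<in> carrier G"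
  shows "subgroup {g \<in> carrier G. commutator G a g \<in> N} G"
proof (rule subgroupI)
  interpret N: normal N G by fact
  show "{g \<in> carrier G. commutator G a g \<in> N} \<noteq> {}"
    using assms by (rule_tac ex_in_conv[THEN iffD1, OF exI[of _ \<one>]]) (simp add: commutator_def)
  fix g assume g: "g \<in> {g \<in> carrier G. commutator G a g \<in> N}"
  then show "inv g \<in> {g \<in> carrier G. commutator G a g \<in> N}"
    using assms by (auto simp: comm_inv N.inv_op_closed2)
  fix h assume h: "h \<in> {g \<in> carrier G. commutator G a g \<in> N}"
  then show "g \<otimes> h \<in> {g \<in> carrier G. commutator G a g \<in> N}"
    using assms g by (auto simp: comm_mult N.inv_op_closed1)
qed auto

lemma cent_sub:
  assumes "S \<subseteq> carrier G"
  shows "subgroup (centralizer G S) G"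
proof (rule subgroupI)
  have "\<one> \<in> centralizer G S" using assms by (auto simp: centralizer_def subset_iff)
  then show "centralizer G S \<noteq> {}" by blast
  fix g assume g: "g \<in> centralizer G S"
  show "inv g \<in> centralizer G S" unfolding centralizer_def
  proof (safe)
    show "inv g \<in> carrier G" using g unfolding centralizer_def by auto
    fix s assume s: "s \<in> S"
    have gc: "g \<in> carrier G" "g \<otimes> s = s \<otimes> g" using g s unfolding centralizer_def by auto
    have sc: "s \<in> carrier G" using s assms by auto
    have "inv g \<otimes> s = inv g \<otimes> (s \<otimes> g) \<otimes> inv g" using gc sc by (simp add: m_assoc)
    also have "\<dots> = s \<otimes> inv g" using gc sc by (simp flip: gc(2) add: m_assoc)
    finally show "inv g \<otimes> s = s \<otimes> inv g" .
  qed
  fix h assume h: "h \<in> centralizer G S"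
  show "g \<otimes> h \<in> centralizer G S" using g h assms unfolding centralizer_def
    by (auto simp: m_assoc) (metis m_assoc subsetD)
qed (auto simp: centralizer_def)


lemma key:
  assumes N: "N \<lhd> G" and ab: "comm_group (G\<lparr>carrier := N\<rparr>)" and a: "a \<in> carrier G"
    and m1: "m1 \<in> carrier G" "commutator G a m1 \<in> N" "m1 \<in> centralizer G N"
    and m2: "m2 \<in> carrier G" "commutator G a m2 \<in> N" "m2 \<in> centralizer G N"
  shows "m1 \<otimes> m2 \<otimes> inv m1 \<otimes> inv m2 \<in> centralizer G {a}"
proof -
  interpret N: normal N G by fact
  have comN: "x \<otimes> y = y \<otimes> x" if "x \<in> N" "y \<in> N" for x y
    using comm_groupE(4)[OF ab, of x y] that by simp
  have cen: "inv m \<otimes> n \<otimes> m = n" if "m \<in> centralizer G N" "n \<in> N" for m n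
  proof -
    have mc: "m \<in> carrier G" "m \<otimes> n = n \<otimes> m" using that unfolding centralizer_def by auto
    have nc: "n \<in> carrier G" using that N.subset by auto
    show ?thesis using mc nc by (simp add: m_assoc flip: mc(2))
  qed
  define n1 where "n1 = commutator G a m1"
  define n2 where "n2 = commutator G a m2"
  have n: "n1 \<in> N" "n2 \<in> N" "n1 \<in> carrier G" "n2 \<in> carrier G"
    using m1 m2 N.subset unfolding n1_def n2_def by auto
  have e1: "commutator G a (m1 \<otimes> m2) = n2 \<otimes> n1"
    using comm_mult[OF a m1(1) m2(1)] cen[OF m2(3) n(1)] unfolding n1_def n2_def by simp
  have e2: "commutator G a (m2 \<otimes> m1) = n1 \<otimes> n2"
    using comm_mult[OF a m2(1) m1(1)] cen[OF m1(3) n(2)] unfolding n1_def n2_def by simp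
  define u where "u = m1 \<otimes> m2"
  define v where "v = m2 \<otimes> m1"
  have uv: "u \<in> carrier G" "v \<in> carrier G" using m1 m2 unfolding u_def v_def by auto
  have eq: "inv u \<otimes> a \<otimes> u = inv v \<otimes> a \<otimes> v"
    using comm_conj[OF a uv(1)] comm_conj[OF a uv(2)] e1 e2 comN[OF n(1,2)]
    unfolding u_def v_def by simp
  have "u \<otimes> (inv u \<otimes> a \<otimes> u) \<otimes> inv v = u \<otimes> (inv v \<otimes> a \<otimes> v) \<otimes> inv v"
    using eq by simp
  then have "a \<otimes> (u \<otimes> inv v) = (u \<otimes> inv v) \<otimes> a"
    using uv a by (simp add: m_assoc)
  moreover have "u \<otimes> inv v = m1 \<otimes> m2 \<otimes> inv m1 \<otimes> inv m2"
    using m1 m2 unfolding u_def v_def by (simp add: inv_mult_group m_assoc)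
  ultimately show ?thesis using uv a m1 m2 unfolding centralizer_def by auto
qed

lemma normal_in_sub:
  assumes "subgroup H G" "subgroup K G" "K \<subseteq> H"
    "\<And>x k. x \<in> H \<Longrightarrow> k \<in> K \<Longrightarrow> x \<otimes> k \<otimes> inv x \<in> K"
  shows "K \<lhd> G\<lparr>carrier := H\<rparr>"
proof -
  have gH: "group (G\<lparr>carrier := H\<rparr>)" using assms(1) by (rule subgroup_imp_group)
  show ?thesis
    unfolding group.normal_inv_iff[OF gH]
    using subgroup_incl[OF assms(2,1,3)] assms(1,4) by simp
qed


lemma conj_hom: "y \<in> carrier G \<Longrightarrow> (\<lambda>z. y \<otimes> z \<otimes> inv y) \<in> hom G G"
  by (auto simp: hom_def m_assoc)

lemma conj_pow: "y \<in> carrier G \<Longrightarrow> z \<in> carrier G \<Longrightarrow> y \<otimes> (z [^] (i::int)) \<otimes> inv y = (y \<otimes> z \<otimes> inv y) [^] i"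
  using hom_int_pow[OF conj_hom, of y z i] group_axioms by simp

lemma cyclic_comm:
  assumes N: "N \<lhd> G" and cyc: "cyclic_group (G\<lparr>carrier := N\<rparr>)"
    and g: "g \<in> carrier G" and h: "h \<in> carrier G"
  shows "g \<otimes> h \<otimes> inv g \<otimes> inv h \<in> centralizer G N"
proof -
  interpret N: normal N G by fact
  have gN: "group (G\<lparr>carrier := N\<rparr>)" by (rule subgroup_imp_group[OF N.subgroup_axioms])
  obtain x where x: "x \<in> N" and Nx: "N = range (\<lambda>n::int. x [^]\<^bsub>G\<lparr>carrier := N\<rparr>\<^esub> n)"
    using cyc unfolding group.cyclic_group[OF gN] by auto
  have Nx': "N = range (\<lambda>n::int. x [^] n)"
    using Nx int_pow_consistent[OF N.subgroup_axioms x] by simp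
  have xc: "x \<in> carrier G" using x N.subset by auto
  have "g \<otimes> x \<otimes> inv g \<in> N" using N.inv_op_closed2 g x by auto
  then obtain k where k: "g \<otimes> x \<otimes> inv g = x [^] (k::int)" using Nx' by auto
  have "h \<otimes> x \<otimes> inv h \<in> N" using N.inv_op_closed2 h x by auto
  then obtain j where j: "h \<otimes> x \<otimes> inv h = x [^] (j::int)" using Nx' by auto
  have W: "g \<otimes> (h \<otimes> n \<otimes> inv h) \<otimes> inv g = h \<otimes> (g \<otimes> n \<otimes> inv g) \<otimes> inv h" if n: "n \<in> N" for n
  proof -
    obtain i where i: "n = x [^] (i::int)" using n Nx' by auto
    have "g \<otimes> (h \<otimes> n \<otimes> inv h) \<otimes> inv g = x [^] (k * (j * i))"
      using i conj_pow[OF h xc] conj_pow[OF g xc] j k xc g h int_pow_pow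
      by (simp add: int_pow_pow)
    moreover have "h \<otimes> (g \<otimes> n \<otimes> inv g) \<otimes> inv h = x [^] (j * (k * i))"
      using i conj_pow[OF h xc] conj_pow[OF g xc] j k xc g h int_pow_pow
      by (simp add: int_pow_pow)
    ultimately show ?thesis by (simp add: ac_simps)
  qed
  define c where "c = g \<otimes> h \<otimes> inv g \<otimes> inv h"
  have cc: "c \<in> carrier G" using g h unfolding c_def by auto
  have "c \<otimes> n = n \<otimes> c" if n: "n \<in> N" for n
  proof -
    have nc: "n \<in> carrier G" using n N.subset by auto
    define n' where "n' = inv (h \<otimes> g) \<otimes> n \<otimes> (h \<otimes> g)"
    have n': "n' \<in> N" unfolding n'_def using N.inv_op_closed1 n g h by auto
    have n'c: "n' \<in> carrier G" using n' N.subset by auto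
    have A: "h \<otimes> (g \<otimes> n' \<otimes> inv g) \<otimes> inv h = n"
      unfolding n'_def using g h nc by (simp add: m_assoc inv_mult_group)
    have B: "g \<otimes> (h \<otimes> n' \<otimes> inv h) \<otimes> inv g = c \<otimes> n \<otimes> inv c"
      unfolding n'_def c_def using g h nc by (simp add: m_assoc inv_mult_group)
    have "c \<otimes> n \<otimes> inv c = n" using W[OF n'] A B by simp
    then have "c \<otimes> n \<otimes> inv c \<otimes> c = n \<otimes> c" by simp
    then show ?thesis using cc nc by (simp add: m_assoc)
  qed
  then show ?thesis using cc unfolding c_def centralizer_def by auto
qed


lemma core_char:
  assumes H: "subgroup H G" and CH: "C \<subseteq> H"
  shows "core (G\<lparr>carrier := H\<rparr>) C = {x \<in> H. \<forall>l\<in>H. l \<otimes> x \<otimes> inv l \<in> C}"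
proof -
  have Hc: "H \<subseteq> carrier G" using H subgroup.subset by auto
  have one: "\<one> \<in> H" using H subgroup.one_closed by auto
  have "core (G\<lparr>carrier := H\<rparr>) C = (\<Inter>l \<in> H. {inv l \<otimes> k \<otimes> l | k. k \<in> C})"
    unfolding core_def using H by simp
  also have "\<dots> = {x \<in> H. \<forall>l\<in>H. l \<otimes> x \<otimes> inv l \<in> C}"
  proof (intro equalityI subsetI)
    fix x assume x: "x \<in> (\<Inter>l \<in> H. {inv l \<otimes> k \<otimes> l | k. k \<in> C})"
    then obtain k0 where "x = inv \<one> \<otimes> k0 \<otimes> \<one>" "k0 \<in> C" using one by blast
    moreover have "k0 \<in> carrier G" using \<open>k0 \<in> C\<close> CH Hc by auto
    ultimately have xH: "x \<in> H" using CH by auto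
    have "l \<otimes> x \<otimes> inv l \<in> C" if l: "l \<in> H" for l
    proof -
      obtain k where k: "x = inv l \<otimes> k \<otimes> l" "k \<in> C" using x l by blast
      have "l \<in> carrier G" "k \<in> carrier G" using l k Hc CH by auto
      then show ?thesis using k by (simp add: m_assoc)
    qed
    then show "x \<in> {x \<in> H. \<forall>l\<in>H. l \<otimes> x \<otimes> inv l \<in> C}" using xH by auto
  next
    fix x assume x: "x \<in> {x \<in> H. \<forall>l\<in>H. l \<otimes> x \<otimes> inv l \<in> C}"
    show "x \<in> (\<Inter>l \<in> H. {inv l \<otimes> k \<otimes> l | k. k \<in> C})"
    proof (safe)
      fix l assume l: "l \<in> H"
      have "l \<in> carrier G" "x \<in> carrier G" using l x Hc by auto
      then have "x = inv l \<otimes> (l \<otimes> x \<otimes> inv l) \<otimes> l" by (simp add: m_assoc)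
      then show "\<exists>k. x = inv l \<otimes> k \<otimes> l \<and> k \<in> C" using x l by blast
    qed
  qed
  finally show ?thesis .
qed

lemma core_sub:
  assumes H: "subgroup H G" and C: "subgroup C G"
  shows "subgroup {x \<in> H. \<forall>l\<in>H. l \<otimes> x \<otimes> inv l \<in> C} G"
proof -
  have Hc: "H \<subseteq> carrier G" using H subgroup.subset by auto
  show ?thesis
  proof (rule subgroupI)
    show "{x \<in> H. \<forall>l\<in>H. l \<otimes> x \<otimes> inv l \<in> C} \<subseteq> carrier G" using Hc by auto
    have "l \<otimes> \<one> \<otimes> inv l \<in> C" if "l \<in> H" for l
      using that Hc C subgroup.one_closed by (metis l_one r_inv subset_iff r_one)
    then have "\<one> \<in> {x \<in> H. \<forall>l\<in>H. l \<otimes> x \<otimes> inv l \<in> C}"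
      using H subgroup.one_closed by blast
    then show "{x \<in> H. \<forall>l\<in>H. l \<otimes> x \<otimes> inv l \<in> C} \<noteq> {}" by blast
  next
    fix x assume x: "x \<in> {x \<in> H. \<forall>l\<in>H. l \<otimes> x \<otimes> inv l \<in> C}"
    show "inv x \<in> {x \<in> H. \<forall>l\<in>H. l \<otimes> x \<otimes> inv l \<in> C}"
    proof (safe)
      show "inv x \<in> H" using x H subgroup.m_inv_closed by auto
      fix l assume l: "l \<in> H"
      have "l \<in> carrier G" "x \<in> carrier G" using l x Hc by auto
      then have "l \<otimes> inv x \<otimes> inv l = inv (l \<otimes> x \<otimes> inv l)"
        by (simp add: m_assoc inv_mult_group)
      then show "l \<otimes> inv x \<otimes> inv l \<in> C" using x l C subgroup.m_inv_closed by fastforce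
    qed
  next
    fix x y assume x: "x \<in> {x \<in> H. \<forall>l\<in>H. l \<otimes> x \<otimes> inv l \<in> C}"
      and y: "y \<in> {x \<in> H. \<forall>l\<in>H. l \<otimes> x \<otimes> inv l \<in> C}"
    show "x \<otimes> y \<in> {x \<in> H. \<forall>l\<in>H. l \<otimes> x \<otimes> inv l \<in> C}"
    proof (safe)
      show "x \<otimes> y \<in> H" using x y H subgroup.m_closed by auto
      fix l assume l: "l \<in> H"
      have "l \<in> carrier G" "x \<in> carrier G" "y \<in> carrier G" using l x y Hc by auto
      then have "l \<otimes> (x \<otimes> y) \<otimes> inv l = (l \<otimes> x \<otimes> inv l) \<otimes> (l \<otimes> y \<otimes> inv l)"
        by (simp add: m_assoc)
      then show "l \<otimes> (x \<otimes> y) \<otimes> inv l \<in> C" using x y l C subgroup.m_closed by fastforce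
    qed
  qed
qed

lemma core_conj:
  assumes H: "subgroup H G" and y: "y \<in> H" and x: "x \<in> H" and xC: "\<forall>l\<in>H. l \<otimes> x \<otimes> inv l \<in> C"
  shows "y \<otimes> x \<otimes> inv y \<in> {x \<in> H. \<forall>l\<in>H. l \<otimes> x \<otimes> inv l \<in> C}"
proof -
  have Hc: "H \<subseteq> carrier G" using H subgroup.subset by auto
  have yc: "y \<in> carrier G" "x \<in> carrier G" using x y Hc by auto
  have "inv y \<in> H" using y subgroup.m_inv_closed[OF H] by simp
  then have m: "y \<otimes> x \<otimes> inv y \<in> H" using x y subgroup.m_closed[OF H] by simp
  have "l \<otimes> (y \<otimes> x \<otimes> inv y) \<otimes> inv l \<in> C" if l: "l \<in> H" for l
  proof -
    have lc: "l \<in> carrier G" using l Hc by auto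
    have "l \<otimes> (y \<otimes> x \<otimes> inv y) \<otimes> inv l = (l \<otimes> y) \<otimes> x \<otimes> inv (l \<otimes> y)"
      using lc yc by (simp add: m_assoc inv_mult_group)
    moreover have "l \<otimes> y \<in> H" using l y subgroup.m_closed[OF H] by simp
    ultimately show ?thesis using xC by simp
  qed
  then show ?thesis using m by simp
qed

lemma conj_cent:
  assumes N: "N \<lhd> G" and x: "x \<in> carrier G" and k: "k \<in> centralizer G N"
  shows "x \<otimes> k \<otimes> inv x \<in> centralizer G N"
proof -
  interpret N: normal N G by fact
  have kc: "k \<in> carrier G" using k unfolding centralizer_def by auto
  have "(x \<otimes> k \<otimes> inv x) \<otimes> n = n \<otimes> (x \<otimes> k \<otimes> inv x)" if n: "n \<in> N" for n
  proof -
    have nc: "n \<in> carrier G" using n N.subset by auto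
    have n': "inv x \<otimes> n \<otimes> x \<in> N" using N.inv_op_closed1 x n by auto
    then have kn: "k \<otimes> (inv x \<otimes> n \<otimes> x) = (inv x \<otimes> n \<otimes> x) \<otimes> k" using k unfolding centralizer_def by auto
    have "(x \<otimes> k \<otimes> inv x) \<otimes> n = x \<otimes> (k \<otimes> (inv x \<otimes> n \<otimes> x)) \<otimes> inv x"
      using x kc nc by (simp add: m_assoc)
    also have "\<dots> = x \<otimes> ((inv x \<otimes> n \<otimes> x) \<otimes> k) \<otimes> inv x" using kn by simp
    also have "\<dots> = n \<otimes> (x \<otimes> k \<otimes> inv x)" using x kc nc by (simp add: m_assoc)
    finally show ?thesis .
  qed
  then show ?thesis using x kc unfolding centralizer_def by auto
qed

end

lemma quot_triv:
  assumes "group L" "K \<lhd> L"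
  shows "((derived (L Mod K) ^^ n) (carrier (L Mod K)) = {\<one>\<^bsub>L Mod K\<^esub>})
     \<longleftrightarrow> (derived L ^^ n) (carrier L) \<subseteq> K"
proof -
  interpret K: normal K L by fact
  interpret L: group L by fact
  interpret h: group_hom L "L Mod K" "\<lambda>x. K #>\<^bsub>L\<^esub> x"
    unfolding group_hom_def group_hom_axioms_def
    using K.factorgroup_is_group K.r_coset_hom_Mod assms(1) by auto
  define D where "D = (derived L ^^ n) (carrier L)"
  have Dsub: "subgroup D L" unfolding D_def using group.exp_of_derived_is_subgroup[OF assms(1)] group.subgroup_self[OF assms(1)] by blast
  have img: "(derived (L Mod K) ^^ n) (carrier (L Mod K)) = (\<lambda>x. K #>\<^bsub>L\<^esub> x) ` D"
    unfolding D_def carrier_FactGroup using h.exp_of_derived_img by blast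
  show ?thesis
  proof
    assume A: "(derived (L Mod K) ^^ n) (carrier (L Mod K)) = {\<one>\<^bsub>L Mod K\<^esub>}"
    show "(derived L ^^ n) (carrier L) \<subseteq> K"
    proof
      fix x assume "x \<in> (derived L ^^ n) (carrier L)"
      then have x: "x \<in> D" "x \<in> carrier L" using Dsub subgroup.subset unfolding D_def by auto
      then have "K #>\<^bsub>L\<^esub> x = K" using A img by auto
      then show "x \<in> K" using group.coset_join1[OF assms(1)] x K.subgroup_axioms by blast
    qed
  next
    assume B: "(derived L ^^ n) (carrier L) \<subseteq> K"
    have "(\<lambda>x. K #>\<^bsub>L\<^esub> x) ` D = {K}"
    proof -
      have "K #>\<^bsub>L\<^esub> x = K" if "x \<in> D" for x
        using B that K.rcos_const assms(1) unfolding D_def by blast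
      moreover have "D \<noteq> {}" using subgroup.one_closed[OF Dsub] by blast
      ultimately show ?thesis by auto
    qed
    then show "(derived (L Mod K) ^^ n) (carrier (L Mod K)) = {\<one>\<^bsub>L Mod K\<^esub>}"
      using img by simp
  qed
qed

lemma (in group) exp_derived_sub:
  assumes "subgroup H G" shows "(derived G ^^ n) H \<subseteq> H"
  using derived_incl[OF _ assms] by (induct n) auto

lemma (in group) exp_derived_consistent:
  assumes "subgroup H G"
  shows "(derived (G\<lparr>carrier := H\<rparr>) ^^ n) H = (derived G ^^ n) H"
proof (induct n)
  case (Suc n)
  then show ?case using derived_consistent[OF exp_derived_sub[OF assms] assms] by simp
qed simp

theorem lemma4p4:
  fixes G :: "('a, 'b) monoid_scheme" and N :: "'a set" and a :: 'a
  assumes "group G" and "finite (carrier G)" and "solvable G"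
    and "N \<lhd> G" and "comm_group (G\<lparr>carrier := N\<rparr>)"
    and "a \<in> carrier G"
  defines "C \<equiv> centralizer G {a}"
    and "CN \<equiv> {g \<in> carrier G. commutator G a g \<in> N}"
  shows "derived_length ((G\<lparr>carrier := CN\<rparr>) Mod (core (G\<lparr>carrier := CN\<rparr>) C))
           \<le> derived_length ((G\<lparr>carrier := CN\<rparr>) Mod (CN \<inter> centralizer G N)) + 1
    \<and> (cyclic_group (G\<lparr>carrier := N\<rparr>) \<longrightarrow>
         derived_length ((G\<lparr>carrier := CN\<rparr>) Mod (core (G\<lparr>carrier := CN\<rparr>) C)) \<le> 2)"
proof -
  interpret G: group G by fact
  interpret N: normal N G by fact
  define L where "L = G\<lparr>carrier := CN\<rparr>"
  define M where "M = CN \<inter> centralizer G N"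
  define K where "K = core L C"
  have a: "a \<in> carrier G" by fact
  have CNsub: "subgroup CN G" unfolding CN_def using G.CN_sub assms(4,6) by blast
  have gL: "group L" unfolding L_def by (rule G.subgroup_imp_group[OF CNsub])
  have CNc: "CN \<subseteq> carrier G" unfolding CN_def by auto
  have cL: "carrier L = CN" unfolding L_def by simp
  have Csub: "subgroup C G" unfolding C_def using G.cent_sub a by auto
  have CinCN: "C \<subseteq> CN"
  proof
    fix g assume g: "g \<in> C"
    then have gc: "g \<in> carrier G" "g \<otimes>\<^bsub>G\<^esub> a = a \<otimes>\<^bsub>G\<^esub> g" unfolding C_def centralizer_def by auto
    have "commutator G a g = inv\<^bsub>G\<^esub> a \<otimes>\<^bsub>G\<^esub> inv\<^bsub>G\<^esub> g \<otimes>\<^bsub>G\<^esub> (a \<otimes>\<^bsub>G\<^esub> g)"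
      unfolding commutator_def using gc a by (simp add: G.m_assoc)
    also have "\<dots> = \<one>\<^bsub>G\<^esub>" using gc a by (simp add: G.m_assoc flip: gc(2))
    finally show "g \<in> CN" unfolding CN_def using gc N.one_closed by simp
  qed
  have Ncs: "N \<subseteq> carrier G" using N.subset .
  have centsub: "subgroup (centralizer G N) G" using G.cent_sub[OF Ncs] .
  have Msub: "subgroup M G" unfolding M_def using G.subgroups_Inter_pair[OF CNsub centsub] .
  have MN: "M \<lhd> L" unfolding L_def
  proof (rule G.normal_in_sub[OF CNsub Msub])
    show "M \<subseteq> CN" unfolding M_def by auto
    fix x k assume x: "x \<in> CN" and k: "k \<in> M"
    have "x \<otimes>\<^bsub>G\<^esub> k \<otimes>\<^bsub>G\<^esub> inv\<^bsub>G\<^esub> x \<in> CN"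
      using x k CNsub unfolding M_def by (meson IntD1 subgroup.m_closed subgroup.m_inv_closed)
    moreover have "x \<otimes>\<^bsub>G\<^esub> k \<otimes>\<^bsub>G\<^esub> inv\<^bsub>G\<^esub> x \<in> centralizer G N"
      using G.conj_cent[OF assms(4)] x k CNc unfolding M_def by blast
    ultimately show "x \<otimes>\<^bsub>G\<^esub> k \<otimes>\<^bsub>G\<^esub> inv\<^bsub>G\<^esub> x \<in> M" unfolding M_def by blast
  qed
  have Kchar: "K = {x \<in> CN. \<forall>l\<in>CN. l \<otimes>\<^bsub>G\<^esub> x \<otimes>\<^bsub>G\<^esub> inv\<^bsub>G\<^esub> l \<in> C}"
    unfolding K_def L_def using G.core_char[OF CNsub CinCN] .
  have KN: "K \<lhd> L" unfolding L_def
  proof (rule G.normal_in_sub[OF CNsub])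
    show "subgroup K G" unfolding Kchar by (rule G.core_sub[OF CNsub Csub])
    show "K \<subseteq> CN" unfolding Kchar by auto
    fix x k assume x: "x \<in> CN" and k: "k \<in> K"
    show "x \<otimes>\<^bsub>G\<^esub> k \<otimes>\<^bsub>G\<^esub> inv\<^bsub>G\<^esub> x \<in> K"
      unfolding Kchar using G.core_conj[OF CNsub x] k unfolding Kchar by blast
  qed
  have cons: "(derived L ^^ n) (carrier L) = (derived G ^^ n) CN" for n
    unfolding L_def using G.exp_derived_consistent[OF CNsub] by simp
  obtain n0 where n0: "(derived G ^^ n0) (carrier G) = {\<one>\<^bsub>G\<^esub>}"
    using assms(3) G.solvable_iff_trivial_derived_seq by blast
  have "(derived L ^^ n0) (carrier L) \<subseteq> M"
  proof -
    have "(derived G ^^ n0) CN \<subseteq> {\<one>\<^bsub>G\<^esub>}" using G.mono_exp_of_derived[OF CNc, of n0] n0 by simp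
    moreover have "\<one>\<^bsub>G\<^esub> \<in> M" using Msub subgroup.one_closed by blast
    ultimately show ?thesis using cons by blast
  qed
  then have ex: "\<exists>n. (derived (L Mod M) ^^ n) (carrier (L Mod M)) = {\<one>\<^bsub>L Mod M\<^esub>}"
    using quot_triv[OF gL MN] by blast
  define d where "d = derived_length (L Mod M)"
  have Pd: "(derived (L Mod M) ^^ d) (carrier (L Mod M)) = {\<one>\<^bsub>L Mod M\<^esub>}"
    unfolding d_def derived_length_def using LeastI_ex[OF ex] .
  have dM: "(derived L ^^ d) (carrier L) \<subseteq> M" using Pd quot_triv[OF gL MN] by blast
  have MK: "derived L M \<subseteq> K"
    unfolding derived_def
  proof (rule group.generate_subgroup_incl[OF gL])
    show "subgroup K L" using KN normal_def by blast
    show "derived_set L M \<subseteq> K"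
    proof
      fix c assume "c \<in> derived_set L M"
      then obtain m1 m2 where m: "m1 \<in> M" "m2 \<in> M"
        and c: "c = m1 \<otimes>\<^bsub>L\<^esub> m2 \<otimes>\<^bsub>L\<^esub> inv\<^bsub>L\<^esub> m1 \<otimes>\<^bsub>L\<^esub> inv\<^bsub>L\<^esub> m2" by blast
      have mCN: "m1 \<in> CN" "m2 \<in> CN" using m unfolding M_def by auto
      have c': "c = m1 \<otimes>\<^bsub>G\<^esub> m2 \<otimes>\<^bsub>G\<^esub> inv\<^bsub>G\<^esub> m1 \<otimes>\<^bsub>G\<^esub> inv\<^bsub>G\<^esub> m2"
        using c mCN CNsub unfolding L_def by simp
      have cCN: "c \<in> CN" unfolding c' using mCN CNsub
        by (meson subgroup.m_closed subgroup.m_inv_closed)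
      have "l \<otimes>\<^bsub>G\<^esub> c \<otimes>\<^bsub>G\<^esub> inv\<^bsub>G\<^esub> l \<in> C" if l: "l \<in> CN" for l
      proof -
        define p1 where "p1 = l \<otimes>\<^bsub>G\<^esub> m1 \<otimes>\<^bsub>G\<^esub> inv\<^bsub>G\<^esub> l"
        define p2 where "p2 = l \<otimes>\<^bsub>G\<^esub> m2 \<otimes>\<^bsub>G\<^esub> inv\<^bsub>G\<^esub> l"
        have invL: "inv\<^bsub>L\<^esub> l = inv\<^bsub>G\<^esub> l" unfolding L_def using G.m_inv_consistent[OF CNsub l] .
        have mulL: "\<And>x y. x \<otimes>\<^bsub>L\<^esub> y = x \<otimes>\<^bsub>G\<^esub> y" unfolding L_def by simp
        have p: "p1 \<in> M" "p2 \<in> M" unfolding p1_def p2_def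
          using normal.inv_op_closed2[OF MN, of l] l m cL invL mulL by auto
        have lc: "l \<in> carrier G" "m1 \<in> carrier G" "m2 \<in> carrier G" using l mCN CNc by auto
        have "l \<otimes>\<^bsub>G\<^esub> c \<otimes>\<^bsub>G\<^esub> inv\<^bsub>G\<^esub> l = p1 \<otimes>\<^bsub>G\<^esub> p2 \<otimes>\<^bsub>G\<^esub> inv\<^bsub>G\<^esub> p1 \<otimes>\<^bsub>G\<^esub> inv\<^bsub>G\<^esub> p2"
          unfolding c' p1_def p2_def using lc by (simp add: G.m_assoc G.inv_mult_group)
        moreover have "p1 \<otimes>\<^bsub>G\<^esub> p2 \<otimes>\<^bsub>G\<^esub> inv\<^bsub>G\<^esub> p1 \<otimes>\<^bsub>G\<^esub> inv\<^bsub>G\<^esub> p2 \<in> C"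
          unfolding C_def
          using G.key[OF assms(4,5) a] p CNc unfolding M_def CN_def by blast
        ultimately show ?thesis by simp
      qed
      then show "c \<in> K" unfolding Kchar using cCN by blast
    qed
  qed
  have "(derived L ^^ Suc d) (carrier L) \<subseteq> K"
  proof -
    have "(derived L ^^ Suc d) (carrier L) = derived L ((derived L ^^ d) (carrier L))" by simp
    also have "\<dots> \<subseteq> derived L M" using group.mono_derived[OF gL dM] .
    finally show ?thesis using MK by blast
  qed
  then have "(derived (L Mod K) ^^ Suc d) (carrier (L Mod K)) = {\<one>\<^bsub>L Mod K\<^esub>}"
    using quot_triv[OF gL KN] by blast
  then have part1: "derived_length (L Mod K) \<le> d + 1"
    unfolding derived_length_def by (simp add: Least_le)
  have part2: "derived_length (L Mod K) \<le> 2" if cyc: "cyclic_group (G\<lparr>carrier := N\<rparr>)"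
  proof -
    have "derived L (carrier L) \<subseteq> M"
      unfolding derived_def
    proof (rule group.generate_subgroup_incl[OF gL])
      show "subgroup M L" using MN normal_def by blast
      show "derived_set L (carrier L) \<subseteq> M"
      proof
        fix c assume "c \<in> derived_set L (carrier L)"
        then obtain g h where gh: "g \<in> CN" "h \<in> CN"
          and c: "c = g \<otimes>\<^bsub>L\<^esub> h \<otimes>\<^bsub>L\<^esub> inv\<^bsub>L\<^esub> g \<otimes>\<^bsub>L\<^esub> inv\<^bsub>L\<^esub> h" using cL by blast
        have c': "c = g \<otimes>\<^bsub>G\<^esub> h \<otimes>\<^bsub>G\<^esub> inv\<^bsub>G\<^esub> g \<otimes>\<^bsub>G\<^esub> inv\<^bsub>G\<^esub> h"
          using c gh CNsub unfolding L_def by simp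
        have "c \<in> CN" unfolding c' using gh CNsub
          by (meson subgroup.m_closed subgroup.m_inv_closed)
        moreover have "c \<in> centralizer G N" unfolding c'
          using G.cyclic_comm[OF assms(4) cyc] gh CNc by blast
        ultimately show "c \<in> M" unfolding M_def by blast
      qed
    qed
    then have "(derived L ^^ 1) (carrier L) \<subseteq> M" by simp
    then have "(derived (L Mod M) ^^ 1) (carrier (L Mod M)) = {\<one>\<^bsub>L Mod M\<^esub>}"
      using quot_triv[OF gL MN] by blast
    then have "d \<le> 1" unfolding d_def derived_length_def by (simp add: Least_le)
    then show ?thesis using part1 by simp
  qed
  show ?thesis using part1 part2 unfolding d_def K_def L_def M_def by simp
qed

end
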